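(* Let $x_0>0$, $y_0>0$ with $x_0\neq y_0$. Then for every $T>0$ there exists a solution $(x,y)\in C^1([0,T])^2$ of the system \[ \dot x(t)=x(t)-\max_{s\in[0,t]}y(s),\qquad \dot y(t)=y(t)-\max_{s\in[0,t]}x(s),\quad t\in[0,T],\qquad x(0)=x_0,\ y(0)=y_0. \] *)

theory Defs
  imports "HOL-Analysis.Analysis"
begin

definition C1_on_with_deriv :: "real \<Rightarrow> real \<Rightarrow> (real \<Rightarrow> real) \<Rightarrow> (real \<Rightarrow> real) \<Rightarrow> bool" where
  "C1_on_with_deriv a b f f' \<longleftrightarrow>
     (\<forall>t\<in>{a..b}. (f has_real_derivative f' t) (at t within {a..b})) \<and> continuous_on {a..b} f'"

end

theory Submission
  imports Defs
begin

lemma aux: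
  fixes x0 y0 T :: real
  assumes "y0 \<le> x0"
  shows "\<exists>x y x' y' :: real \<Rightarrow> real.
           C1_on_with_deriv 0 T x x' \<and> C1_on_with_deriv 0 T y y' \<and>
           (\<forall>t\<in>{0..T}. x' t = x t - Sup (y ` {0..t}) \<and>
                        y' t = y t - Sup (x ` {0..t})) \<and>
           x 0 = x0 \<and> y 0 = y0"
proof -
  define d where "d = x0 - y0"
  have d: "d \<ge> 0" using assms d_def by simp
  define x where "x = (\<lambda>t::real. y0 + d * exp t)"
  define y where "y = (\<lambda>t::real. y0 - d * t * exp t)"
  define x' where "x' = (\<lambda>t::real. d * exp t)"
  define y' where "y' = (\<lambda>t::real. - d * exp t - d * t * exp t)"
  have dx: "(x has_real_derivative x' t) (at t within S)" for t S
    unfolding x_def x'_def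
    by (rule has_field_derivative_at_within) (auto intro!: derivative_eq_intros)
  have dy: "(y has_real_derivative y' t) (at t within S)" for t S
    unfolding y_def y'_def
    by (rule has_field_derivative_at_within) (auto intro!: derivative_eq_intros simp: algebra_simps)
  have c1: "C1_on_with_deriv 0 T x x'"
    unfolding C1_on_with_deriv_def using dx unfolding x'_def
    by (auto intro!: continuous_intros)
  have c2: "C1_on_with_deriv 0 T y y'"
    unfolding C1_on_with_deriv_def using dy unfolding y'_def
    by (auto intro!: continuous_intros)
  have supy: "Sup (y ` {0..t}) = y0" if "t \<ge> 0" for t
  proof (rule cSup_eq_maximum)
    have "y 0 = y0" by (simp add: y_def)
    then show "y0 \<in> y ` {0..t}" using that by (metis atLeastAtMost_iff image_eqI order_refl)
    show "z \<le> y0" if "z \<in> y ` {0..t}" for z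
    proof -
      from that obtain s where s: "s \<ge> 0" "z = y s" by auto
      have "d * s * exp s \<ge> 0" using d s by simp
      then show "z \<le> y0" using s by (simp add: y_def)
    qed
  qed
  have supx: "Sup (x ` {0..t}) = x t" if "t \<ge> 0" for t
  proof (rule cSup_eq_maximum)
    show "x t \<in> x ` {0..t}" using that by auto
    show "z \<le> x t" if "z \<in> x ` {0..t}" for z using d that by (auto simp: x_def intro!: mult_left_mono)
  qed
  have "\<forall>t\<in>{0..T}. x' t = x t - Sup (y ` {0..t}) \<and> y' t = y t - Sup (x ` {0..t})"
    using supx supy by (auto simp: x_def y_def x'_def y'_def algebra_simps)
  moreover have "x 0 = x0" "y 0 = y0" by (auto simp: x_def y_def d_def)
  ultimately show ?thesis using c1 c2 by blast
qed

theorem mainTheorem3: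
  fixes x0 y0 T :: real
  assumes "x0 > 0" and "y0 > 0" and "x0 \<noteq> y0" and "T > 0"
  shows "\<exists>x y x' y' :: real \<Rightarrow> real.
           C1_on_with_deriv 0 T x x' \<and> C1_on_with_deriv 0 T y y' \<and>
           (\<forall>t\<in>{0..T}. x' t = x t - Sup (y ` {0..t}) \<and>
                        y' t = y t - Sup (x ` {0..t})) \<and>
           x 0 = x0 \<and> y 0 = y0"
proof (cases "y0 \<le> x0")
  case True
  then show ?thesis by (rule aux)
next
  case False
  then have "x0 \<le> y0" by simp
  from aux[OF this, of T] obtain x y x' y' where
    "C1_on_with_deriv 0 T x x'" "C1_on_with_deriv 0 T y y'"
    "\<forall>t\<in>{0..T}. x' t = x t - Sup (y ` {0..t}) \<and> y' t = y t - Sup (x ` {0..t})"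
    "x 0 = y0" "y 0 = x0" by blast
  then show ?thesis by blast
qed

end
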